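(* Let $A$ be a commutative ring with $1$, $M\in\operatorname{Sym}_n(A)$ and $a\in(\Sigma(M):A^n)$. Then $b^2\in(\Sigma(M):A^n)$ for every $b\in\Sigma(a)$.
   Context: $\Sigma A^2$ denotes the set of finite sums of squares in $A$. A matrix $N\in\operatorname{Sym}_n(A)$ is a sum of squares if $N=\sum_{i=1}^m w_iw_i^{t}$ for some column vectors $w_i\in A^n$. For $M\in\operatorname{Sym}_n(A)$, $\Sigma(M)$ is the set of $v\in A^n$ such that $sM=vv^{t}+N$ for some $s\in\Sigma A^2$ and some sum of squares $N\in\operatorname{Sym}_n(A)$; it is an $A$-submodule of $A^n$. For $n=1$: $b\in\Sigma(a)$ iff $sa=b^2+t$ for some $s,t\in\Sigma A^2$. $(\Sigma(M):A^n)=\{c\in A: cv\in\Sigma(M)\text{ for all }v\in A^n\}$. *)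

theory Defs
  imports "HOL-Analysis.Finite_Cartesian_Product"
begin

definition sos :: "'a::comm_ring_1 set" where
  "sos = {s. \<exists>l :: 'a list. s = sum_list (map (\<lambda>x. x * x) l)}"

definition sym_mat :: "'a::comm_ring_1 ^ 'n::finite ^ 'n \<Rightarrow> bool" where
  "sym_mat M \<longleftrightarrow> (\<forall>i j. M $ i $ j = M $ j $ i)"

definition outer :: "'a::comm_ring_1 ^ 'n::finite \<Rightarrow> 'a ^ 'n ^ 'n" where
  "outer v = (\<chi> i j. v $ i * v $ j)"

definition sos_mat :: "'a::comm_ring_1 ^ 'n::finite ^ 'n \<Rightarrow> bool" where
  "sos_mat N \<longleftrightarrow> (\<exists>ws :: ('a ^ 'n) list. N = sum_list (map outer ws))"

definition smult_mat :: "'a::comm_ring_1 \<Rightarrow> 'a ^ 'n::finite ^ 'n \<Rightarrow> 'a ^ 'n ^ 'n" where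
  "smult_mat s M = (\<chi> i j. s * M $ i $ j)"

definition smult_vec :: "'a::comm_ring_1 \<Rightarrow> 'a ^ 'n::finite \<Rightarrow> 'a ^ 'n" where
  "smult_vec c v = (\<chi> i. c * v $ i)"

definition Sigma_mat :: "'a::comm_ring_1 ^ 'n::finite ^ 'n \<Rightarrow> ('a ^ 'n) set" where
  "Sigma_mat M = {v. \<exists>s N. s \<in> sos \<and> sos_mat N \<and> smult_mat s M = outer v + N}"

text \<open>The case n = 1: b in Sigma(a) iff s a = b^2 + t with s, t in sos.\<close>
definition Sigma_elt :: "'a::comm_ring_1 \<Rightarrow> 'a set" where
  "Sigma_elt a = {b. \<exists>s t. s \<in> sos \<and> t \<in> sos \<and> s * a = b\<^sup>2 + t}"

definition Sigma_colon :: "'a::comm_ring_1 ^ 'n::finite ^ 'n \<Rightarrow> 'a set" where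
  "Sigma_colon M = {c. \<forall>v :: 'a ^ 'n. smult_vec c v \<in> Sigma_mat M}"

end

theory Submission
  imports Defs
begin

lemma sos_sq: "x * x \<in> sos"
  unfolding sos_def by (rule CollectI, rule exI[of _ "[x]"], simp)

lemma sos_add: "s \<in> sos \<Longrightarrow> t \<in> sos \<Longrightarrow> s + t \<in> sos"
proof -
  assume "s \<in> sos" "t \<in> sos"
  then obtain l1 l2 where "s = sum_list (map (\<lambda>x. x * x) l1)" "t = sum_list (map (\<lambda>x. x * x) l2)"
    unfolding sos_def by blast
  hence "s + t = sum_list (map (\<lambda>x. x * x) (l1 @ l2))" by simp
  thus ?thesis unfolding sos_def by blast
qed

lemma sq_sum_aux: "(a * a) * sum_list (map (\<lambda>x. x * x) l) = sum_list (map (\<lambda>x. a * x * (a * x)) l)"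
  for a :: "'a::comm_ring_1"
  by (induction l) (simp_all add: distrib_left mult_ac)

lemma sos_mult_aux:
  "sum_list (map (\<lambda>x. x * x) l1) * sum_list (map (\<lambda>x. x * x) l2)
   = sum_list (map (\<lambda>x. x * x) (concat (map (\<lambda>x. map ((*) x) l2) l1)))"
  for l1 l2 :: "'a::comm_ring_1 list"
  by (induction l1) (simp_all add: distrib_right sq_sum_aux map_concat o_def)

lemma sos_mult: "s \<in> sos \<Longrightarrow> t \<in> sos \<Longrightarrow> s * t \<in> sos"
  unfolding sos_def using sos_mult_aux by blast

lemma sos_mat_add: "sos_mat N1 \<Longrightarrow> sos_mat N2 \<Longrightarrow> sos_mat (N1 + N2)"
proof -
  assume "sos_mat N1" "sos_mat N2"
  then obtain l1 l2 where "N1 = sum_list (map outer l1)" "N2 = sum_list (map outer l2)"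
    unfolding sos_mat_def by blast
  hence "N1 + N2 = sum_list (map outer (l1 @ l2))" by simp
  thus ?thesis unfolding sos_mat_def by blast
qed

lemma sos_mat_zero: "sos_mat 0"
  unfolding sos_mat_def by (rule exI[of _ "[]"]) simp

lemma smult_mat_add: "smult_mat c (N1 + N2) = smult_mat c N1 + smult_mat c N2"
  unfolding smult_mat_def by (simp add: vec_eq_iff distrib_left)

lemma smult_mat_add2: "smult_mat (c + d) N = smult_mat c N + smult_mat d N"
  unfolding smult_mat_def by (simp add: vec_eq_iff distrib_right)

lemma smult_mat_0: "smult_mat 0 N = 0" "smult_mat c 0 = 0"
  unfolding smult_mat_def by (simp_all add: vec_eq_iff)

lemma smult_mat_mult: "smult_mat c (smult_mat d N) = smult_mat (c * d) N"
  unfolding smult_mat_def by (simp add: vec_eq_iff mult_ac)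

lemma smult_mat_sum_list: "smult_mat c (sum_list Ns) = sum_list (map (smult_mat c) Ns)"
  by (induction Ns) (simp_all add: smult_mat_0 smult_mat_add)

lemma outer_smult: "outer (smult_vec x w) = smult_mat (x * x) (outer w)"
  unfolding outer_def smult_vec_def smult_mat_def by (simp add: vec_eq_iff mult_ac)

lemma sos_mat_sq: "sos_mat N \<Longrightarrow> sos_mat (smult_mat (x * x) N)"
proof -
  assume "sos_mat N"
  then obtain ws where "N = sum_list (map outer ws)" unfolding sos_mat_def by blast
  hence "smult_mat (x * x) N = sum_list (map outer (map (smult_vec x) ws))"
    by (simp add: smult_mat_sum_list o_def outer_smult)
  thus ?thesis unfolding sos_mat_def by blast
qed

lemma sos_mat_smult: "s \<in> sos \<Longrightarrow> sos_mat N \<Longrightarrow> sos_mat (smult_mat s N)"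
proof -
  assume "s \<in> sos" "sos_mat N"
  then obtain l where l: "s = sum_list (map (\<lambda>x. x * x) l)" unfolding sos_def by blast
  have "sos_mat (smult_mat (sum_list (map (\<lambda>x. x * x) l)) N)"
    by (induction l) (simp_all add: smult_mat_0 sos_mat_zero smult_mat_add2 sos_mat_add sos_mat_sq \<open>sos_mat N\<close>)
  thus ?thesis using l by simp
qed

theorem corollary3p10:
  fixes M :: "'a::comm_ring_1 ^ 'n::finite ^ 'n" and a :: 'a
  assumes "sym_mat M"
    and "a \<in> Sigma_colon M"
  shows "\<forall>b \<in> Sigma_elt a. b\<^sup>2 \<in> Sigma_colon M"
proof (intro ballI)
  fix b assume "b \<in> Sigma_elt a"
  then obtain s t where st: "s \<in> sos" "t \<in> sos" "s * a = b\<^sup>2 + t"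
    unfolding Sigma_elt_def by blast
  show "b\<^sup>2 \<in> Sigma_colon M" unfolding Sigma_colon_def
  proof (intro CollectI allI)
    fix v :: "'a ^ 'n"
    have "smult_vec a v \<in> Sigma_mat M" using assms(2) unfolding Sigma_colon_def by blast
    then obtain s1 N1 where s1: "s1 \<in> sos" "sos_mat N1" "smult_mat s1 M = outer (smult_vec a v) + N1"
      unfolding Sigma_mat_def by blast
    define r where "r = b * b * t + b * b * t + t * t"
    have r: "r \<in> sos" unfolding r_def
      by (intro sos_add sos_mult sos_sq st)
    have "(s * a) * (s * a) = (b\<^sup>2 * b\<^sup>2) + r"
      unfolding st(3) r_def by (simp add: power2_eq_square algebra_simps)
    have "smult_mat (s * s * s1) M = smult_mat (s * s) (outer (smult_vec a v) + N1)"
      by (simp add: s1(3) flip: smult_mat_mult)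
    also have "\<dots> = smult_mat ((s * a) * (s * a)) (outer v) + smult_mat (s * s) N1"
      by (simp add: smult_mat_add outer_smult smult_mat_mult mult_ac)
    also have "\<dots> = outer (smult_vec (b\<^sup>2) v) + (smult_mat r (outer v) + smult_mat (s * s) N1)"
      by (simp add: \<open>(s * a) * (s * a) = _\<close> smult_mat_add2 outer_smult add.assoc)
    finally have eq: "smult_mat (s * s * s1) M = outer (smult_vec (b\<^sup>2) v) + (smult_mat r (outer v) + smult_mat (s * s) N1)" .
    have "sos_mat (outer v)" unfolding sos_mat_def by (rule exI[of _ "[v]"]) simp
    hence "sos_mat (smult_mat r (outer v) + smult_mat (s * s) N1)"
      by (intro sos_mat_add sos_mat_smult r sos_sq s1(2))
    moreover have "s * s * s1 \<in> sos" by (intro sos_mult sos_sq s1(1))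
    ultimately show "smult_vec (b\<^sup>2) v \<in> Sigma_mat M" unfolding Sigma_mat_def using eq by blast
  qed
qed

end
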